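(* Let $\mathbb{K}$ be a field of characteristic $0$ and let $L=\sum_{i=0}^{J}a_i(n)\sigma^i$ with $a_i(n)\in\mathbb{K}[n]$ not all zero, and let $d_L=\max_{0\le i\le J}\{\deg a_i(n)\}$. Then $\deg L\le d_L$, and if $\deg L=d_L$ then $L$ is nondegenerated.
   Context: $\sigma$ is the shift operator. Put $b_k(n)=\sum_{j=k}^{J}\binom{j}{k}a_{J-j}(n+j-J)$ for $0\le k\le J$ and $d=\deg L=\max_{0\le k\le J}\{\deg b_k(n)-k\}$. Let $f(s)=\sum_{k=0}^{J}[n^{d+k}](b_k(n))\,s^{\underline{k}}$, where $[n^m](b)$ is the coefficient of $n^m$ in $b$ and $s^{\underline{k}}=s(s-1)\cdots(s-k+1)$, and $R_L=\{s\in\mathbb{N}=\{0,1,2,\dots\}:f(s)=0\}$. $L$ is degenerated if $R_L\neq\emptyset$ and nondegenerated otherwise. *)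

theory Defs
  imports "HOL-Computational_Algebra.Polynomial"
begin

text \<open>Operator L = sum_{i=0}^J a_i(n) sigma^i, given by coefficient function a and order J.\<close>

definition shift_poly :: "'a::comm_ring_1 poly \<Rightarrow> int \<Rightarrow> 'a poly" where
  "shift_poly p c = pcompose p [:of_int c, 1:]"

definition bcoef :: "(nat \<Rightarrow> 'a::comm_ring_1 poly) \<Rightarrow> nat \<Rightarrow> nat \<Rightarrow> 'a poly" where
  "bcoef a J k = (\<Sum>j=k..J. of_nat (j choose k) * shift_poly (a (J - j)) (int j - int J))"

text \<open>deg L = max_k (deg b_k - k), the degree of the zero polynomial being -infinity,
  i.e. only nonzero b_k contribute.\<close>
definition degL :: "(nat \<Rightarrow> 'a::comm_ring_1 poly) \<Rightarrow> nat \<Rightarrow> int" where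
  "degL a J = Max {int (degree (bcoef a J k)) - int k | k. k \<le> J \<and> bcoef a J k \<noteq> 0}"

definition dL :: "(nat \<Rightarrow> 'a::zero poly) \<Rightarrow> nat \<Rightarrow> nat" where
  "dL a J = Max {degree (a i) | i. i \<le> J}"

definition coeff_int :: "'a::zero poly \<Rightarrow> int \<Rightarrow> 'a" where
  "coeff_int p m = (if m < 0 then 0 else coeff p (nat m))"

definition falling :: "'a::comm_ring_1 \<Rightarrow> nat \<Rightarrow> 'a" where
  "falling s k = (\<Prod>i<k. s - of_nat i)"

definition indicial :: "(nat \<Rightarrow> 'a::comm_ring_1 poly) \<Rightarrow> nat \<Rightarrow> 'a \<Rightarrow> 'a" where
  "indicial a J s = (\<Sum>k\<le>J. coeff_int (bcoef a J k) (degL a J + int k) * falling s k)"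

definition RL :: "(nat \<Rightarrow> 'a::comm_ring_1 poly) \<Rightarrow> nat \<Rightarrow> nat set" where
  "RL a J = {s. indicial a J (of_nat s) = 0}"

definition degenerated :: "(nat \<Rightarrow> 'a::comm_ring_1 poly) \<Rightarrow> nat \<Rightarrow> bool" where
  "degenerated a J \<longleftrightarrow> RL a J \<noteq> {}"

definition nondegenerated :: "(nat \<Rightarrow> 'a::comm_ring_1 poly) \<Rightarrow> nat \<Rightarrow> bool" where
  "nondegenerated a J \<longleftrightarrow> \<not> degenerated a J"

end

theory Submission
  imports Defs
begin

lemma degree_shift_poly[simp]: "degree (shift_poly (p::'a::idom poly) c) = degree p"
  unfolding shift_poly_def by (simp add: degree_pcompose)

lemma shift_poly_eq_0[simp]: "shift_poly (p::'a::idom poly) c = 0 \<longleftrightarrow> p = 0"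
  unfolding shift_poly_def by (simp add: pcompose_eq_0_iff)

lemma deg_a_le: "i \<le> J \<Longrightarrow> degree (a i) \<le> dL a J"
  unfolding dL_def
proof -
  assume "i \<le> J"
  have fin: "finite {degree (a i) | i. i \<le> J}"
    using finite_image_set[of "\<lambda>i. i \<le> J" "\<lambda>i. degree (a i)"] by simp
  show "degree (a i) \<le> Max {degree (a i) | i. i \<le> J}"
    by (rule Max_ge[OF fin]) (use \<open>i \<le> J\<close> in blast)
qed

lemma deg_b_le:
  fixes a :: "nat \<Rightarrow> 'a::idom poly"
  shows "degree (bcoef a J k) \<le> dL a J"
  unfolding bcoef_def
proof (rule degree_sum_le)
  fix j assume "j \<in> {k..J}"
  hence "J - j \<le> J" by simp
  have "degree (of_nat (j choose k) * shift_poly (a (J - j)) (int j - int J))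
        \<le> degree (of_nat (j choose k) :: 'a poly) + degree (shift_poly (a (J - j)) (int j - int J))"
    by (rule degree_mult_le)
  also have "\<dots> \<le> dL a J" using deg_a_le[OF \<open>J - j \<le> J\<close>, of a] by (simp add: of_nat_poly)
  finally show "degree (of_nat (j choose k) * shift_poly (a (J - j)) (int j - int J)) \<le> dL a J" .
qed simp

theorem lemma3p2:
  fixes a :: "nat \<Rightarrow> 'a::field_char_0 poly" and J :: nat
  assumes "\<exists>i\<le>J. a i \<noteq> 0"
  shows "degL a J \<le> int (dL a J) \<and> (degL a J = int (dL a J) \<longrightarrow> nondegenerated a J)"
proof -
  define S where "S = {int (degree (bcoef a J k)) - int k | k. k \<le> J \<and> bcoef a J k \<noteq> 0}"
  have finS: "finite S" unfolding S_def
    using finite_image_set[of "\<lambda>k. k \<le> J \<and> bcoef a J k \<noteq> 0" "\<lambda>k. int (degree (bcoef a J k)) - int k"]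
    by simp
  define T where "T = {j. j \<le> J \<and> a (J - j) \<noteq> 0}"
  obtain i where i: "i \<le> J" "a i \<noteq> 0" using assms by blast
  have "J - i \<in> T" unfolding T_def using i by simp
  hence Tne: "T \<noteq> {}" by blast
  have finT: "finite T" unfolding T_def by simp
  define j0 where "j0 = Max T"
  have j0T: "j0 \<in> T" unfolding j0_def using Max_in[OF finT Tne] .
  have j0max: "\<And>j. j \<in> T \<Longrightarrow> j \<le> j0" unfolding j0_def using Max_ge[OF finT] by blast
  have "bcoef a J j0 = (\<Sum>j\<in>{j0}. of_nat (j choose j0) * shift_poly (a (J - j)) (int j - int J))"
    unfolding bcoef_def
  proof (rule sum.mono_neutral_right)
    show "finite {j0..J}" by simp
    show "{j0} \<subseteq> {j0..J}" using j0T unfolding T_def by auto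
    show "\<forall>j\<in>{j0..J} - {j0}. of_nat (j choose j0) * shift_poly (a (J - j)) (int j - int J) = 0"
    proof
      fix j assume j: "j \<in> {j0..J} - {j0}"
      hence "j \<notin> T" using j0max by fastforce
      hence "a (J - j) = 0" using j unfolding T_def by auto
      thus "of_nat (j choose j0) * shift_poly (a (J - j)) (int j - int J) = 0" by simp
    qed
  qed
  also have "\<dots> = shift_poly (a (J - j0)) (int j0 - int J)" by simp
  finally have "bcoef a J j0 \<noteq> 0" using j0T unfolding T_def by simp
  hence "int (degree (bcoef a J j0)) - int j0 \<in> S" unfolding S_def using j0T unfolding T_def by blast
  hence Sne: "S \<noteq> {}" by blast
  have dS: "degL a J = Max S" unfolding degL_def S_def by simp
  have part1: "degL a J \<le> int (dL a J)"
    unfolding dS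
  proof (rule Max.boundedI[OF finS Sne])
    fix x assume "x \<in> S"
    then obtain k where "x = int (degree (bcoef a J k)) - int k" unfolding S_def by blast
    thus "x \<le> int (dL a J)" using deg_b_le[of a J k] by simp
  qed
  have part2: "nondegenerated a J" if eq: "degL a J = int (dL a J)"
  proof -
    have "Max S \<in> S" using Max_in[OF finS Sne] .
    then obtain k0 where k0: "k0 \<le> J" "bcoef a J k0 \<noteq> 0"
      "Max S = int (degree (bcoef a J k0)) - int k0" unfolding S_def by blast
    have "k0 = 0"
      using k0 eq dS deg_b_le[of a J k0] by auto
    hence "degree (bcoef a J 0) = dL a J"
      using k0 eq dS by auto
    have b0: "bcoef a J 0 \<noteq> 0" using k0 \<open>k0 = 0\<close> by simp
    define d where "d = dL a J"
    have "indicial a J s = (\<Sum>k\<in>{0}. coeff_int (bcoef a J k) (degL a J + int k) * falling s k)" for s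
      unfolding indicial_def
    proof (rule sum.mono_neutral_right)
      show "\<forall>k\<in>{..J} - {0}. coeff_int (bcoef a J k) (degL a J + int k) * falling s k = 0"
      proof
        fix k assume k: "k \<in> {..J} - {0}"
        have "coeff_int (bcoef a J k) (degL a J + int k) = coeff (bcoef a J k) (d + k)"
          unfolding coeff_int_def eq d_def by (simp add: nat_add_distrib)
        also have "\<dots> = 0"
          using deg_b_le[of a J k] k unfolding d_def by (intro coeff_eq_0) auto
        finally show "coeff_int (bcoef a J k) (degL a J + int k) * falling s k = 0" by simp
      qed
    qed auto
    hence "indicial a J s = lead_coeff (bcoef a J 0)" for s
      using \<open>degree (bcoef a J 0) = dL a J\<close>
      by (simp add: coeff_int_def eq falling_def)
    hence "indicial a J s \<noteq> 0" for s using b0 by simp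
    thus ?thesis unfolding nondegenerated_def degenerated_def RL_def by simp
  qed
  show ?thesis using part1 part2 by blast
qed

end
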